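(* Let $K\subset\mathbb R^d$ be compact and $q<1$. There exists $C_q>0$ such that for any $\mu\in\mathcal F(K)$ and any $r>0$ with $\mu(B(x,r))>0$ for every $x\in K$, there exists $\delta>0$ such that every $\nu\in\mathcal P(K)$ with $L(\mu,\nu)<\delta$ satisfies $I_\nu(2r,q)\le C_qI_\mu(r,q)$ and $I_\nu(r,q)\ge C_q^{-1}I_\mu(2r,q)$.
   Context: $\mathcal P(K)$ is the set of Borel probability measures on $K$, $\mathcal F(K)$ the subset of those with finite support. $L$ is the Fortet–Mourier metric $L(\mu,\nu)=\sup_f|\int fd\mu-\int fd\nu|$ over $f:K\to\mathbb R$ with $|f|\le1$ and Lipschitz constant $\le1$. $B(x,r)$ is the open ball and $I_\mu(r,q)=\int_K\mu(B(x,r))^{q-1}d\mu(x)$ (possibly $+\infty$). *)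

theory Defs
  imports "HOL-Probability.Probability"
begin

definition prob_on :: "'a::euclidean_space set \<Rightarrow> 'a measure \<Rightarrow> bool" where
  "prob_on K M \<longleftrightarrow> prob_space M \<and> sets M = sets borel \<and> measure M K = 1"

definition fin_prob_on :: "'a::euclidean_space set \<Rightarrow> 'a measure \<Rightarrow> bool" where
  "fin_prob_on K M \<longleftrightarrow> prob_on K M \<and> (\<exists>S. finite S \<and> S \<subseteq> K \<and> measure M S = 1)"

definition fortet_mourier :: "'a::euclidean_space set \<Rightarrow> 'a measure \<Rightarrow> 'a measure \<Rightarrow> real" where
  "fortet_mourier K M N = Sup {\<bar>(\<integral>x\<in>K. f x \<partial>M) - (\<integral>x\<in>K. f x \<partial>N)\<bar> | f.
      (\<forall>x\<in>K. \<bar>f x\<bar> \<le> 1) \<and> 1-lipschitz_on K f}"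

text \<open>I_mu(r,q) = \<integral>_K mu(B(x,r))^(q-1) dmu(x), valued in [0,\<infinity>];
  a zero ball mass is raised to the negative power q-1 as +\<infinity>.\<close>
definition I_mu :: "'a::euclidean_space set \<Rightarrow> 'a measure \<Rightarrow> real \<Rightarrow> real \<Rightarrow> ennreal" where
  "I_mu K M r q = (\<integral>\<^sup>+x\<in>K. (if measure M (ball x r) = 0 then \<infinity>
        else ennreal (measure M (ball x r) powr (q - 1))) \<partial>M)"

end

theory Submission
  imports Defs
begin

lemma fin_nn:
  fixes M :: "'a::euclidean_space measure"
  assumes M: "prob_space M" "sets M = sets borel" and S: "finite S" "measure M S = 1"
  shows "(\<integral>\<^sup>+x. g x \<partial>M) = (\<Sum>p\<in>S. g p * emeasure M {p})"
proof -
  have "closed S" using S(1) by (rule finite_imp_closed)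
  then have Sb: "S \<in> sets M" using M(2) by simp
  have AE: "AE x in M. x \<in> S" using prob_space.AE_in_set_eq_1[OF M(1) Sb] S by simp
  have "(\<integral>\<^sup>+x. g x \<partial>M) = (\<integral>\<^sup>+x. (\<Sum>p\<in>S. g p * indicator {p} x) \<partial>M)"
  proof (rule nn_integral_cong_AE)
    show "AE x in M. g x = (\<Sum>p\<in>S. g p * indicator {p} x)"
      using AE
    proof eventually_elim
      case (elim x)
      have "(\<Sum>p\<in>S. g p * indicator {p} x) = (\<Sum>p\<in>S. if p = x then g p else 0)"
        by (rule sum.cong) (auto simp: indicator_def)
      also have "\<dots> = g x" using elim S by (simp add: sum.delta')
      finally show ?case by simp
    qed
  qed
  also have "\<dots> = (\<Sum>p\<in>S. \<integral>\<^sup>+x. g p * indicator {p} x \<partial>M)"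
    by (rule nn_integral_sum) (use M in auto)
  also have "\<dots> = (\<Sum>p\<in>S. g p * emeasure M {p})"
    by (rule sum.cong) (use M in \<open>auto intro!: nn_integral_cmult_indicator\<close>)
  finally show ?thesis .
qed

lemma prob_onD: assumes "prob_on K M" shows "prob_space M" "sets M = sets borel" "measure M K = 1"
  using assms by (auto simp: prob_on_def)

lemma space_po: assumes "prob_on K M" shows "space M = UNIV"
  using assms by (metis prob_onD(2) sets_eq_imp_space_eq space_borel)

lemma conc:
  assumes "prob_on K M" "K \<in> sets borel" "A \<in> sets borel"
  shows "measure M (A \<inter> K) = measure M A"
proof -
  have AE: "AE x in M. x \<in> K"
    using prob_space.AE_in_set_eq_1[OF prob_onD(1)[OF assms(1)]] assms prob_onD[OF assms(1)] by simp
  have "emeasure M (A \<inter> K) = emeasure M A"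
    by (rule emeasure_eq_AE) (use AE assms prob_onD[OF assms(1)] in auto)
  then show ?thesis by (simp add: measure_def)
qed

lemma abs_int_le1:
  fixes h :: "'a::euclidean_space \<Rightarrow> real"
  assumes "prob_on K M" "\<forall>x\<in>K. \<bar>h x\<bar> \<le> 1"
  shows "\<bar>set_lebesgue_integral M K h\<bar> \<le> 1"
proof (cases "set_integrable M K h")
  case True
  interpret prob_space M using prob_onD[OF assms(1)] by simp
  have "\<bar>set_lebesgue_integral M K h\<bar> \<le> integral\<^sup>L M (\<lambda>_. 1::real)"
    unfolding set_lebesgue_integral_def
    by (rule integral_abs_bound_integral) (use True assms in \<open>auto simp: set_integrable_def indicator_def\<close>)
  then show ?thesis using prob_space by simp
next
  case False
  then show ?thesis
    by (simp add: set_lebesgue_integral_def set_integrable_def not_integrable_integral_eq)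
qed

lemma fm_bound:
  fixes f :: "'a::euclidean_space \<Rightarrow> real"
  assumes M: "prob_on K M" and N: "prob_on K N" and B: "B > 0"
    and fb: "\<forall>x\<in>K. \<bar>f x\<bar> \<le> B" and fl: "B-lipschitz_on K f"
  shows "\<bar>set_lebesgue_integral M K f - set_lebesgue_integral N K f\<bar> \<le> B * fortet_mourier K M N"
proof -
  define g where "g = (\<lambda>x. f x / B)"
  have gb: "\<forall>x\<in>K. \<bar>g x\<bar> \<le> 1" using fb B by (auto simp: g_def divide_le_eq_1)
  have gl: "1-lipschitz_on K g"
  proof (rule lipschitz_onI)
    fix x y assume "x \<in> K" "y \<in> K"
    then have "dist (f x) (f y) \<le> B * dist x y" using fl by (auto simp: lipschitz_on_def)
    moreover have "dist (g x) (g y) = dist (f x) (f y) / B" using B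
      by (simp add: g_def dist_real_def diff_divide_distrib[symmetric] abs_divide)
    ultimately show "dist (g x) (g y) \<le> 1 * dist x y" using B
      by (simp add: pos_divide_le_eq mult.commute)
  qed simp
  have int_g: "\<And>P. set_lebesgue_integral P K g = set_lebesgue_integral P K f / B"
  proof -
    fix P
    have "(\<lambda>x. indicator K x *\<^sub>R g x) = (\<lambda>x. (indicator K x *\<^sub>R f x) / B)"
      by (auto simp: g_def)
    then show "set_lebesgue_integral P K g = set_lebesgue_integral P K f / B"
      unfolding set_lebesgue_integral_def by (simp only: integral_divide_zero)
  qed
  let ?S = "{\<bar>(\<integral>x\<in>K. f x \<partial>M) - (\<integral>x\<in>K. f x \<partial>N)\<bar> | f.
      (\<forall>x\<in>K. \<bar>f x\<bar> \<le> 1) \<and> 1-lipschitz_on K f} :: real set"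
  have mem: "\<bar>set_lebesgue_integral M K g - set_lebesgue_integral N K g\<bar> \<in> ?S"
    using gb gl by blast
  have bdd: "bdd_above ?S"
  proof (rule bdd_aboveI)
    fix y :: real assume "y \<in> ?S"
    then obtain h :: "'a \<Rightarrow> real" where y: "y = \<bar>(\<integral>x\<in>K. h x \<partial>M) - (\<integral>x\<in>K. h x \<partial>N)\<bar>" and hb: "\<forall>x\<in>K. \<bar>h x\<bar> \<le> 1"
      by blast
    have "\<bar>(\<integral>x\<in>K. h x \<partial>M)\<bar> \<le> 1" "\<bar>(\<integral>x\<in>K. h x \<partial>N)\<bar> \<le> 1"
      using abs_int_le1[of K M h] abs_int_le1[of K N h] M N hb by auto
    then show "y \<le> 2" unfolding y by linarith
  qed
  have "\<bar>set_lebesgue_integral M K g - set_lebesgue_integral N K g\<bar> \<le> fortet_mourier K M N"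
    unfolding fortet_mourier_def by (rule cSup_upper[OF mem bdd])
  then have "\<bar>set_lebesgue_integral M K f - set_lebesgue_integral N K f\<bar> / B \<le> fortet_mourier K M N"
    unfolding int_g using B by (metis abs_divide abs_of_pos diff_divide_distrib)
  then show ?thesis using B by (simp add: pos_divide_le_eq mult.commute)
qed

lemma set_int:
  fixes f :: "'a::euclidean_space \<Rightarrow> real"
  assumes "prob_on K M" "compact K" "continuous_on K f" "\<forall>x\<in>K. \<bar>f x\<bar> \<le> B" "B \<ge> 0"
  shows "set_integrable M K f"
proof -
  interpret prob_space M using prob_onD[OF assms(1)] by simp
  have Kb: "K \<in> sets borel" using assms(2) by (simp add: compact_imp_closed borel_closed)
  have "(\<lambda>x. indicator K x *\<^sub>R f x) \<in> borel_measurable borel"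
    by (rule borel_measurable_continuous_on_indicator[OF Kb assms(3)])
  moreover have eq: "borel_measurable M = borel_measurable borel"
    by (rule measurable_cong_sets) (simp_all add: prob_onD[OF assms(1)])
  ultimately have meas: "(\<lambda>x. indicator K x *\<^sub>R f x) \<in> borel_measurable M"
    by (simp only: eq)
  show ?thesis unfolding set_integrable_def
    by (rule integrable_const_bound[where B=B]) (use meas assms in \<open>auto simp: indicator_def\<close>)
qed

lemma clamp_lip: "\<bar>max 0 (min 1 a) - max 0 (min 1 b)\<bar> \<le> \<bar>a - (b::real)\<bar>"
  by (simp add: max_def min_def abs_if)

lemma bump_lip:
  assumes "w > 0"
  shows "dist (max 0 (min 1 ((c - dist x z) / w))) (max 0 (min 1 ((c - dist y z) / w))) \<le> (1/w) * dist x y"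
proof -
  have "dist (max 0 (min 1 ((c - dist x z) / w))) (max 0 (min 1 ((c - dist y z) / w)))
      \<le> \<bar>(c - dist x z) / w - (c - dist y z) / w\<bar>"
    unfolding dist_real_def by (rule clamp_lip)
  also have "\<dots> = \<bar>dist y z - dist x z\<bar> / w" using assms
    by (simp add: diff_divide_distrib[symmetric] abs_divide)
  also have "\<dots> \<le> dist x y / w"
    using assms dist_triangle[of x z y] dist_triangle[of y z x] dist_commute[of x y]
    by (intro divide_right_mono) (auto simp: abs_le_iff)
  finally show ?thesis by simp
qed

lemma ind_int:
  fixes P :: "'a::euclidean_space measure"
  assumes "prob_on K P" "K \<in> sets borel" "A \<in> sets borel"
  shows "set_integrable P K (indicator A :: 'a \<Rightarrow> real)" "set_lebesgue_integral P K (indicator A) = measure P A"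
proof -
  interpret prob_space P using prob_onD[OF assms(1)] by simp
  have eq: "(\<lambda>x. indicator K x *\<^sub>R (indicator A x :: real)) = (indicator (A \<inter> K) :: 'a \<Rightarrow> real)"
    by (auto simp: indicator_def)
  have AK: "A \<inter> K \<in> sets P" using assms prob_onD(2)[OF assms(1)] by auto
  have "A \<in> sets P" "K \<in> sets P" using assms prob_onD(2)[OF assms(1)] by auto
  then show "set_integrable P K (indicator A :: 'a \<Rightarrow> real)" unfolding set_integrable_def
    by (intro integrable_mult_indicator integrable_real_indicator) (auto simp: less_top[symmetric])
  show "set_lebesgue_integral P K (indicator A) = measure P A" unfolding set_lebesgue_integral_def eq
    using AK conc[OF assms] by simp
qed

lemma bump_transfer:
  fixes M N :: "'a::euclidean_space measure"
  assumes M: "prob_on K M" and N: "prob_on K N" and K: "compact K" and w: "w > 0"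
    and A: "A \<subseteq> cball z (c - w)" "A \<in> sets borel" and D: "ball z c \<subseteq> D" "D \<in> sets borel"
  shows "measure M A \<le> measure N D + max 1 (1/w) * fortet_mourier K M N"
    and "measure N A \<le> measure M D + max 1 (1/w) * fortet_mourier K M N"
proof -
  define f where "f = (\<lambda>y. max 0 (min 1 ((c - dist y z) / w)))"
  have Kb: "K \<in> sets borel" using K by (simp add: compact_imp_closed borel_closed)
  have lip1: "(1/w)-lipschitz_on K f"
    by (rule lipschitz_onI) (use w bump_lip in \<open>auto simp: f_def\<close>)
  have lip: "(max 1 (1/w))-lipschitz_on K f"
    by (rule lipschitz_on_le[OF lip1]) auto
  have cont: "continuous_on K f" using lipschitz_on_continuous_on[OF lip1] .
  have fb: "\<forall>x\<in>K. \<bar>f x\<bar> \<le> max 1 (1/w)" by (auto simp: f_def)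
  have fb1: "\<forall>x\<in>K. \<bar>f x\<bar> \<le> 1" by (auto simp: f_def)
  have fm: "\<bar>set_lebesgue_integral M K f - set_lebesgue_integral N K f\<bar> \<le> max 1 (1/w) * fortet_mourier K M N"
    by (rule fm_bound[OF M N _ fb lip]) auto
  have lo: "indicator A x \<le> f x" for x
  proof (cases "x \<in> A")
    case True
    then have "dist x z \<le> c - w" using A by (auto simp: dist_commute)
    then have "(c - dist x z) / w \<ge> 1" using w by (simp add: field_simps)
    then show ?thesis using True by (simp add: f_def)
  qed (auto simp: f_def)
  have hi: "f x \<le> indicator D x" for x
  proof (cases "x \<in> D")
    case False
    then have "dist x z \<ge> c" using D by (metis dist_commute mem_ball not_le subsetD)
    then have "(c - dist x z) / w \<le> 0" using w by (simp add: divide_nonpos_pos)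
    then show ?thesis using False by (simp add: f_def)
  qed (auto simp: f_def)
  have chain: "measure P A \<le> set_lebesgue_integral P K f \<and> set_lebesgue_integral P K f \<le> measure P D"
    if P: "prob_on K P" for P
  proof -
    have fi: "set_integrable P K f" by (rule set_int[OF P K cont fb1]) simp
    have "set_lebesgue_integral P K (indicator A) \<le> set_lebesgue_integral P K f"
      by (rule set_integral_mono[OF ind_int(1)[OF P Kb A(2)] fi]) (use lo in auto)
    moreover have "set_lebesgue_integral P K f \<le> set_lebesgue_integral P K (indicator D)"
      by (rule set_integral_mono[OF fi ind_int(1)[OF P Kb D(2)]]) (use hi in auto)
    ultimately show ?thesis using ind_int(2)[OF P Kb A(2)] ind_int(2)[OF P Kb D(2)] by simp
  qed
  show "measure M A \<le> measure N D + max 1 (1/w) * fortet_mourier K M N"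
    using chain[OF M] chain[OF N] fm by linarith
  show "measure N A \<le> measure M D + max 1 (1/w) * fortet_mourier K M N"
    using chain[OF M] chain[OF N] fm by linarith
qed

lemma Min_lip:
  fixes g :: "'b \<Rightarrow> 'a::metric_space \<Rightarrow> real"
  assumes "finite S" "S \<noteq> {}" "\<And>p x y. p \<in> S \<Longrightarrow> g p x \<le> g p y + L * dist x y"
  shows "Min ((\<lambda>p. g p x) ` S) \<le> Min ((\<lambda>p. g p y) ` S) + L * dist x y"
proof -
  have "Min ((\<lambda>p. g p y) ` S) \<in> (\<lambda>p. g p y) ` S" using assms(1,2) by (intro Min_in) auto
  then obtain p0 where p0: "p0 \<in> S" "Min ((\<lambda>p. g p y) ` S) = g p0 y" by auto
  have "Min ((\<lambda>p. g p x) ` S) \<le> g p0 x" using p0 assms(1) by (auto intro: Min_le)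
  also have "\<dots> \<le> g p0 y + L * dist x y" using assms(3) p0 by auto
  finally show ?thesis using p0 by simp
qed

lemma Max_lip:
  fixes g :: "'b \<Rightarrow> 'a::metric_space \<Rightarrow> real"
  assumes "finite S" "S \<noteq> {}" "\<And>p x y. p \<in> S \<Longrightarrow> g p x \<le> g p y + L * dist x y"
  shows "Max ((\<lambda>p. g p x) ` S) \<le> Max ((\<lambda>p. g p y) ` S) + L * dist x y"
proof -
  have "Max ((\<lambda>p. g p x) ` S) \<in> (\<lambda>p. g p x) ` S" using assms(1,2) by (intro Max_in) auto
  then obtain p0 where p0: "p0 \<in> S" "Max ((\<lambda>p. g p x) ` S) = g p0 x" by auto
  have "g p0 x \<le> g p0 y + L * dist x y" using assms(3) p0 by auto
  also have "g p0 y \<le> Max ((\<lambda>p. g p y) ` S)" using p0 assms(1) by (auto intro: Max_ge)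
  finally show ?thesis using p0 by simp
qed

lemma nn_set:
  fixes f :: "'a::euclidean_space \<Rightarrow> real"
  assumes "prob_on K P" "compact K" "continuous_on K f" "\<forall>x\<in>K. 0 \<le> f x \<and> f x \<le> B"
  shows "(\<integral>\<^sup>+x. ennreal (indicator K x *\<^sub>R f x) \<partial>P) = ennreal (set_lebesgue_integral P K f)"
proof -
  have B: "B \<ge> 0 \<or> K = {}" using assms(4) by force
  have "set_integrable P K f"
  proof (cases "K = {}")
    case True then show ?thesis by (simp add: set_integrable_def)
  next
    case False then show ?thesis
      using assms B by (intro set_int[where B=B]) auto
  qed
  then show ?thesis unfolding set_lebesgue_integral_def set_integrable_def
    by (intro nn_integral_eq_integral) (use assms in \<open>auto simp: indicator_def\<close>)
qed

lemma int_fin: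
  fixes f :: "'a::euclidean_space \<Rightarrow> real"
  assumes P: "prob_on K P" "compact K" "continuous_on K f" "\<forall>x\<in>K. 0 \<le> f x \<and> f x \<le> B"
    and S: "finite S" "S \<subseteq> K" "measure P S = 1"
  shows "set_lebesgue_integral P K f = (\<Sum>p\<in>S. f p * measure P {p})"
proof -
  interpret prob_space P using prob_onD[OF P(1)] by simp
  have "ennreal (set_lebesgue_integral P K f) = (\<integral>\<^sup>+x. ennreal (indicator K x *\<^sub>R f x) \<partial>P)"
    using nn_set[OF P] by simp
  also have "\<dots> = (\<Sum>p\<in>S. ennreal (indicator K p *\<^sub>R f p) * emeasure P {p})"
    by (rule fin_nn) (use prob_onD[OF P(1)] S in auto)
  also have "\<dots> = (\<Sum>p\<in>S. ennreal (f p * measure P {p}))"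
    by (rule sum.cong) (use S P(4) in \<open>auto simp: emeasure_eq_measure ennreal_mult\<close>)
  also have "\<dots> = ennreal (\<Sum>p\<in>S. f p * measure P {p})"
    by (rule sum_ennreal) (use S P(4) in auto)
  finally have *: "ennreal (set_lebesgue_integral P K f) = ennreal (\<Sum>p\<in>S. f p * measure P {p})" .
  have "0 \<le> (\<Sum>p\<in>S. f p * measure P {p})" using S P(4) by (auto intro!: sum_nonneg)
  moreover have "0 \<le> set_lebesgue_integral P K f"
    unfolding set_lebesgue_integral_def using P(4) by (auto intro!: integral_nonneg_AE simp: indicator_def)
  ultimately show ?thesis using * by simp
qed

lemma Imu_fin:
  fixes M :: "'a::euclidean_space measure"
  assumes P: "prob_on K M" and S: "finite S" "S \<subseteq> K" "measure M S = 1"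
    and pos: "\<forall>p\<in>S. measure M (ball p \<rho>) > 0"
  shows "I_mu K M \<rho> q = ennreal (\<Sum>p\<in>S. measure M (ball p \<rho>) powr (q - 1) * measure M {p})"
proof -
  interpret prob_space M using prob_onD[OF P] by simp
  have "I_mu K M \<rho> q = (\<Sum>p\<in>S. ((if measure M (ball p \<rho>) = 0 then \<infinity>
        else ennreal (measure M (ball p \<rho>) powr (q - 1))) * indicator K p) * emeasure M {p})"
    unfolding I_mu_def by (rule fin_nn) (use prob_onD[OF P] S in auto)
  also have "\<dots> = (\<Sum>p\<in>S. ennreal (measure M (ball p \<rho>) powr (q - 1) * measure M {p}))"
    by (rule sum.cong) (use S pos in \<open>auto simp: emeasure_eq_measure ennreal_mult\<close>)
  also have "\<dots> = ennreal (\<Sum>p\<in>S. measure M (ball p \<rho>) powr (q - 1) * measure M {p})"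
    by (rule sum_ennreal) auto
  finally show ?thesis .
qed

lemma Imu_ge1:
  fixes M :: "'a::euclidean_space measure"
  assumes P: "prob_on K M" and S: "finite S" "S \<subseteq> K" "measure M S = 1"
    and pos: "\<forall>p\<in>S. measure M (ball p \<rho>) > 0" and q: "q < 1"
  shows "1 \<le> (\<Sum>p\<in>S. measure M (ball p \<rho>) powr (q - 1) * measure M {p})"
proof -
  interpret prob_space M using prob_onD[OF P] by simp
  have "1 = (\<Sum>p\<in>S. measure M {p})"
    using S finite_measure_eq_sum_singleton[OF S(1)] prob_onD(2)[OF P] by simp
  also have "\<dots> \<le> (\<Sum>p\<in>S. measure M (ball p \<rho>) powr (q - 1) * measure M {p})"
  proof (rule sum_mono)
    fix p assume p: "p \<in> S"
    have "1 powr (q - 1) \<le> measure M (ball p \<rho>) powr (q - 1)"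
      by (rule powr_mono2') (use q pos p in auto)
    then show "measure M {p} \<le> measure M (ball p \<rho>) powr (q - 1) * measure M {p}"
      by (simp add: mult_le_cancel_right1)
  qed
  finally show ?thesis .
qed

lemma m0_exists:
  fixes M :: "'a::euclidean_space measure"
  assumes P: "prob_on K M" and S: "finite S" "measure M S = 1"
  shows "\<exists>m0>0. m0 \<le> 1 \<and> (\<forall>x \<rho>. measure M (ball x \<rho>) > 0 \<longrightarrow> measure M (ball x \<rho>) \<ge> m0)"
proof -
  interpret prob_space M using prob_onD[OF P] by simp
  define T where "T = {measure M {p} | p. p \<in> S \<and> measure M {p} > 0}"
  have fT: "finite T" unfolding T_def using S(1) by auto
  obtain m where m: "m > 0" "\<forall>t\<in>T. m \<le> t"
  proof (cases "T = {}")
    case True then show ?thesis using that[of 1] by auto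
  next
    case False
    have "Min T \<in> T" using Min_in[OF fT False] .
    then have "Min T > 0" unfolding T_def by auto
    then show ?thesis using that[of "Min T"] fT by auto
  qed
  show ?thesis
  proof (intro exI conjI allI impI)
    show "min m 1 > 0" "min m 1 \<le> 1" using m by auto
    fix x \<rho> assume pos: "measure M (ball x \<rho>) > 0"
    have "emeasure M (ball x \<rho>) = (\<integral>\<^sup>+y. indicator (ball x \<rho>) y \<partial>M)"
      using prob_onD(2)[OF P] by simp
    also have "\<dots> = (\<Sum>p\<in>S. indicator (ball x \<rho>) p * emeasure M {p})"
      by (rule fin_nn) (use prob_onD[OF P] S in auto)
    finally have eq: "emeasure M (ball x \<rho>) = (\<Sum>p\<in>S. indicator (ball x \<rho>) p * emeasure M {p})" .
    have "emeasure M (ball x \<rho>) \<noteq> 0" using pos by (simp add: emeasure_eq_measure)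
    then obtain p where p: "p \<in> S" "indicator (ball x \<rho>) p * emeasure M {p} \<noteq> (0::ennreal)"
      unfolding eq by (metis (mono_tags, lifting) sum.neutral)
    then have pin: "p \<in> ball x \<rho>" and pm0: "measure M {p} \<noteq> 0"
      by (auto simp: indicator_def emeasure_eq_measure split: if_splits)
    have pm: "measure M {p} > 0" using pm0 measure_nonneg[of M "{p}"] by linarith
    have "m \<le> measure M {p}" using m p pm unfolding T_def by auto
    also have "\<dots> \<le> measure M (ball x \<rho>)"
      using pin prob_onD(2)[OF P] by (intro finite_measure_mono) auto
    finally show "min m 1 \<le> measure M (ball x \<rho>)" by simp
  qed
qed

lemma min_aux: "u \<le> v + d \<Longrightarrow> v \<le> u + d \<Longrightarrow> \<bar>min c u - min c v\<bar> \<le> (d::real)"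
  by (simp add: min_def abs_le_iff)

lemma max_aux: "u \<le> v + d \<Longrightarrow> v \<le> u + d \<Longrightarrow> \<bar>max c u - max c v\<bar> \<le> (d::real)"
  by (simp add: max_def abs_le_iff)

lemma main_fixed:
  fixes K :: "'a::euclidean_space set" and \<mu> :: "'a measure"
  assumes K: "compact K" and q: "q < 1" and fin: "fin_prob_on K \<mu>" and r: "r > 0"
    and pos: "\<forall>x\<in>K. measure \<mu> (ball x r) > 0"
  shows "\<exists>\<delta>>0. \<forall>\<nu>. prob_on K \<nu> \<and> fortet_mourier K \<mu> \<nu> < \<delta> \<longrightarrow>
              I_mu K \<nu> (2 * r) q \<le> ennreal (2 powr (2-q)) * I_mu K \<mu> r q \<and>
              I_mu K \<nu> r q \<ge> ennreal (1 / 2 powr (2-q)) * I_mu K \<mu> (2 * r) q"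
proof -
  have P: "prob_on K \<mu>" using fin by (simp add: fin_prob_on_def)
  interpret mp: prob_space \<mu> using prob_onD[OF P] by simp
  obtain S where S: "finite S" "S \<subseteq> K" "measure \<mu> S = 1" using fin by (auto simp: fin_prob_on_def)
  have Sne: "S \<noteq> {}" using S by auto
  obtain m0 where m0: "m0 > 0" "m0 \<le> 1" "\<forall>x \<rho>. measure \<mu> (ball x \<rho>) > 0 \<longrightarrow> measure \<mu> (ball x \<rho>) \<ge> m0"
    using m0_exists[OF P S(1,3)] by auto
  have mK: "\<And>x. x \<in> K \<Longrightarrow> m0 \<le> measure \<mu> (ball x r)" using pos m0 by auto
  have mono2: "measure \<mu> (ball x r) \<le> measure \<mu> (ball x (2*r))" for x
    using prob_onD[OF P] r by (intro mp.finite_measure_mono) (auto simp: subset_ball)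
  have mK2: "\<And>x. x \<in> K \<Longrightarrow> m0 \<le> measure \<mu> (ball x (2*r))" using mK mono2 order_trans by blast
  have pos2: "\<forall>p\<in>S. measure \<mu> (ball p (2*r)) > 0" using mK2 S m0 by force
  have posS: "\<forall>p\<in>S. measure \<mu> (ball p r) > 0" using pos S by auto
  define a where "a p = measure \<mu> (ball p r) powr (q-1)" for p
  define b where "b p = measure \<mu> (ball p (2*r)) powr (q-1)" for p
  define I1 where "I1 = (\<Sum>p\<in>S. a p * measure \<mu> {p})"
  define I2 where "I2 = (\<Sum>p\<in>S. b p * measure \<mu> {p})"
  have I1eq: "I_mu K \<mu> r q = ennreal I1" unfolding I1_def a_def by (rule Imu_fin[OF P S posS])
  have I2eq: "I_mu K \<mu> (2*r) q = ennreal I2" unfolding I2_def b_def by (rule Imu_fin[OF P S pos2])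
  have I1ge: "1 \<le> I1" unfolding I1_def a_def by (rule Imu_ge1[OF P S posS q])
  have I2ge: "1 \<le> I2" unfolding I2_def b_def by (rule Imu_ge1[OF P S pos2 q])
  define M0 where "M0 = (m0/2) powr (q-1)"
  have M0ge: "1 \<le> M0"
  proof -
    have "1 powr (q-1) \<le> (m0/2) powr (q-1)" by (rule powr_mono2') (use q m0 in auto)
    then show ?thesis by (simp add: M0_def)
  qed
  define L where "L = 2*M0/r"
  have L: "L \<ge> 0" "L * (r/2) = M0" using M0ge r by (auto simp: L_def)
  define B1 where "B1 = max 1 (1/(r/2))"
  define B2 where "B2 = max 1 (max M0 L)"
  have B1: "B1 > 0" and B2: "B2 > 0" "M0 \<le> B2" "L \<le> B2" by (auto simp: B1_def B2_def)
  define \<delta> where "\<delta> = min (m0/(2*B1)) (2 powr (q-2) / B2)"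
  have \<delta>pos: "\<delta> > 0" using m0 B1 B2 by (auto simp: \<delta>_def)
  have p21: "1 \<le> 2 powr (1-q)" using powr_mono[of 0 "1-q" 2] q by simp
  have p22: "2 powr (q-2) \<le> 1" using powr_mono[of "q-2" 0 2] q by simp
  have p23: "2 powr (2-q) = 2 * 2 powr (1-q)" using powr_add[of 2 1 "1-q"] by simp
  have p24: "2 powr (q-1) = 2 * 2 powr (q-2)" using powr_add[of 2 1 "q-2"] by simp
  have p25: "2 powr (q-1) \<le> 1" using powr_mono[of "q-1" 0 2] q by simp
  have p26: "2 powr (1-q) = 1 / 2 powr (q-1)" using powr_minus_divide[of 2 "q-1"] by simp
  have p27: "1 / 2 powr (2-q) = 2 powr (q-2)" using powr_minus_divide[of 2 "q-2"] by simp
  have a_nn: "0 \<le> a p" for p by (simp add: a_def)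
  have b_nn: "0 \<le> b p" for p by (simp add: b_def)
  have bM0: "b p \<le> M0" if "p \<in> S" for p
    unfolding b_def M0_def by (rule powr_mono2') (use q m0 mK2[of p] that S in auto)
  show ?thesis
  proof (intro exI[of _ \<delta>] conjI allI impI \<delta>pos)
    fix \<nu> assume "prob_on K \<nu> \<and> fortet_mourier K \<mu> \<nu> < \<delta>"
    then have N: "prob_on K \<nu>" and F: "fortet_mourier K \<mu> \<nu> < \<delta>" by auto
    have E1: "B1 * fortet_mourier K \<mu> \<nu> \<le> m0/2"
    proof -
      have "B1 * fortet_mourier K \<mu> \<nu> \<le> B1 * \<delta>" using F B1 by simp
      also have "\<dots> \<le> B1 * (m0/(2*B1))" using B1 by (intro mult_left_mono) (auto simp: \<delta>_def)
      finally show ?thesis using B1 by simp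
    qed
    have E2: "B2 * fortet_mourier K \<mu> \<nu> \<le> 2 powr (q-2)"
    proof -
      have "B2 * fortet_mourier K \<mu> \<nu> \<le> B2 * \<delta>" using F B2 by simp
      also have "\<dots> \<le> B2 * (2 powr (q-2) / B2)" using B2 by (intro mult_left_mono) (auto simp: \<delta>_def)
      finally show ?thesis using B2 by simp
    qed
    have Kb: "K \<in> sets borel" using K by (simp add: compact_imp_closed borel_closed)
    have bA: "measure \<mu> (ball z r) \<le> measure \<nu> (ball x (2*r)) + m0/2" if d: "dist x z < r/2" for x z
    proof -
      have sub1: "ball z r \<subseteq> cball z (3*r/2 - r/2)" by auto
      have sub2: "ball z (3*r/2) \<subseteq> ball x (2*r)"
      proof
        fix y assume "y \<in> ball z (3*r/2)"
        then have "dist z y < 3*r/2" by simp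
        then show "y \<in> ball x (2*r)" using d dist_triangle[of x y z] by simp
      qed
      have "measure \<mu> (ball z r) \<le> measure \<nu> (ball x (2*r)) + max 1 (1/(r/2)) * fortet_mourier K \<mu> \<nu>"
        by (rule bump_transfer(1)[OF P N K _ sub1 _ sub2]) (use r in auto)
      then show ?thesis using E1 unfolding B1_def by linarith
    qed
    have bA': "measure \<nu> (ball x r) \<le> measure \<mu> (ball z (2*r)) + m0/2" if d: "dist x z < r/2" for x z
    proof -
      have sub1: "ball x r \<subseteq> cball z (2*r - r/2)"
      proof
        fix y assume "y \<in> ball x r"
        then have "dist x y < r" by simp
        then show "y \<in> cball z (2*r - r/2)" using d dist_triangle[of z y x] by (simp add: dist_commute)
      qed
      have "measure \<nu> (ball x r) \<le> measure \<mu> (ball z (2*r)) + max 1 (1/(r/2)) * fortet_mourier K \<mu> \<nu>"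
        by (rule bump_transfer(2)[OF P N K _ sub1 _ subset_refl]) (use r in auto)
      then show ?thesis using E1 unfolding B1_def by linarith
    qed
    have nu2: "m0/2 \<le> measure \<nu> (ball x (2*r))" if "x \<in> K" for x
      using bA[of x x] mK[OF that] r by simp
    define \<psi> where "\<psi> x = min M0 (Min ((\<lambda>p. 2 powr (1-q) * a p + L * dist x p) ` S))" for x
    have \<psi>_ge: "measure \<nu> (ball x (2*r)) powr (q-1) \<le> \<psi> x" if x: "x \<in> K" for x
    proof -
      have t0: "measure \<nu> (ball x (2*r)) powr (q-1) \<le> M0"
        unfolding M0_def by (rule powr_mono2') (use q nu2[OF x] m0 in auto)
      have "measure \<nu> (ball x (2*r)) powr (q-1) \<le> 2 powr (1-q) * a p + L * dist x p" if p: "p \<in> S" for p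
      proof (cases "dist x p < r/2")
        case True
        have mp: "m0 \<le> measure \<mu> (ball p r)" using mK S p by auto
        have "measure \<mu> (ball p r)/2 \<le> measure \<nu> (ball x (2*r))" using bA[OF True] mp by linarith
        then have "measure \<nu> (ball x (2*r)) powr (q-1) \<le> (measure \<mu> (ball p r)/2) powr (q-1)"
          by (intro powr_mono2') (use q mp m0 in auto)
        also have "\<dots> = 2 powr (1-q) * a p" unfolding a_def powr_divide p26 by simp
        also have "\<dots> \<le> 2 powr (1-q) * a p + L * dist x p" using L by simp
        finally show ?thesis .
      next
        case False
        then have "L * (r/2) \<le> L * dist x p" using L by (intro mult_left_mono) auto
        moreover have "0 \<le> 2 powr (1-q) * a p" using a_nn by simp
        ultimately show ?thesis using t0 L by linarith
      qed
      then show ?thesis using t0 S Sne by (simp add: \<psi>_def Min_ge_iff)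
    qed
    have \<psi>_S: "\<psi> p \<le> 2 powr (1-q) * a p" if p: "p \<in> S" for p
    proof -
      have "Min ((\<lambda>p'. 2 powr (1-q) * a p' + L * dist p p') ` S) \<le> 2 powr (1-q) * a p + L * dist p p"
        using S p by (intro Min_le) (auto intro: rev_image_eqI)
      then show ?thesis by (simp add: \<psi>_def)
    qed
    have \<psi>_b: "0 \<le> \<psi> x \<and> \<psi> x \<le> M0" for x
      using S Sne M0ge a_nn L by (auto simp: \<psi>_def Min_ge_iff intro!: add_nonneg_nonneg)
    have \<psi>_lip: "L-lipschitz_on K \<psi>"
    proof (rule lipschitz_onI)
      fix x y :: 'a
      have g: "2 powr (1-q) * a p + L * dist u p \<le> (2 powr (1-q) * a p + L * dist v p) + L * dist u v" for p u v
      proof -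
        have "dist u p \<le> dist u v + dist v p" by (rule dist_triangle)
        then have "L * dist u p \<le> L * dist u v + L * dist v p" using L by (metis distrib_left mult_left_mono)
        then show ?thesis by simp
      qed
      have u1: "Min ((\<lambda>p. 2 powr (1-q) * a p + L * dist x p) ` S) \<le> Min ((\<lambda>p. 2 powr (1-q) * a p + L * dist y p) ` S) + L * dist x y"
        by (rule Min_lip[OF S(1) Sne, of "\<lambda>p u. 2 powr (1-q) * a p + L * dist u p"]) (rule g)
      have u2: "Min ((\<lambda>p. 2 powr (1-q) * a p + L * dist y p) ` S) \<le> Min ((\<lambda>p. 2 powr (1-q) * a p + L * dist x p) ` S) + L * dist x y"
        using Min_lip[OF S(1) Sne, of "\<lambda>p u. 2 powr (1-q) * a p + L * dist u p" L y x] g by (simp add: dist_commute)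
      show "dist (\<psi> x) (\<psi> y) \<le> L * dist x y"
        unfolding \<psi>_def dist_real_def by (rule min_aux[OF u1 u2])
    qed (use L in auto)
    have \<psi>_cont: "continuous_on K \<psi>" by (rule lipschitz_on_continuous_on[OF \<psi>_lip])
    have "I_mu K \<nu> (2 * r) q \<le> (\<integral>\<^sup>+x. ennreal (indicator K x *\<^sub>R \<psi> x) \<partial>\<nu>)"
      unfolding I_mu_def
    proof (rule nn_integral_mono)
      fix x
      show "(if measure \<nu> (ball x (2 * r)) = 0 then \<infinity> else ennreal (measure \<nu> (ball x (2 * r)) powr (q - 1))) * indicator K x
          \<le> ennreal (indicator K x *\<^sub>R \<psi> x)"
      proof (cases "x \<in> K")
        case True
        then have "measure \<nu> (ball x (2 * r)) \<noteq> 0" using nu2[OF True] m0 by auto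
        then show ?thesis using True \<psi>_ge[OF True] by (simp add: ennreal_leI)
      qed simp
    qed
    also have "\<dots> = ennreal (set_lebesgue_integral \<nu> K \<psi>)"
      by (rule nn_set[OF N K \<psi>_cont]) (use \<psi>_b in auto)
    also have "\<dots> \<le> ennreal (2 powr (2-q) * I1)"
    proof (rule ennreal_leI)
      have fm\<psi>: "\<bar>set_lebesgue_integral \<mu> K \<psi> - set_lebesgue_integral \<nu> K \<psi>\<bar> \<le> B2 * fortet_mourier K \<mu> \<nu>"
        by (rule fm_bound[OF P N B2(1)]) (use \<psi>_b B2 in \<open>auto intro: lipschitz_on_le[OF \<psi>_lip] order_trans\<close>)
      have int\<mu>: "set_lebesgue_integral \<mu> K \<psi> = (\<Sum>p\<in>S. \<psi> p * measure \<mu> {p})"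
        by (rule int_fin[OF P K \<psi>_cont _ S]) (use \<psi>_b in auto)
      have "(\<Sum>p\<in>S. \<psi> p * measure \<mu> {p}) \<le> (\<Sum>p\<in>S. 2 powr (1-q) * a p * measure \<mu> {p})"
        by (rule sum_mono) (use \<psi>_S in \<open>auto intro: mult_right_mono\<close>)
      also have "\<dots> = 2 powr (1-q) * I1" by (simp add: I1_def sum_distrib_left mult.assoc)
      finally have i1: "set_lebesgue_integral \<mu> K \<psi> \<le> 2 powr (1-q) * I1" using int\<mu> by simp
      have h1: "I1 \<le> 2 powr (1-q) * I1" using mult_right_mono[OF p21, of I1] I1ge by simp
      have h2: "2 powr (2-q) * I1 = 2 * (2 powr (1-q) * I1)" using p23 by simp
      have h3: "set_lebesgue_integral \<nu> K \<psi> \<le> set_lebesgue_integral \<mu> K \<psi> + B2 * fortet_mourier K \<mu> \<nu>"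
        using fm\<psi> unfolding abs_le_iff by linarith
      show "set_lebesgue_integral \<nu> K \<psi> \<le> 2 powr (2-q) * I1"
        using i1 h1 h2 h3 E2 p22 I1ge by linarith
    qed
    also have "\<dots> = ennreal (2 powr (2-q)) * I_mu K \<mu> r q"
      using I1ge by (simp add: I1eq ennreal_mult)
    finally show "I_mu K \<nu> (2 * r) q \<le> ennreal (2 powr (2-q)) * I_mu K \<mu> r q" .
    define \<phi> where "\<phi> x = max 0 (Max ((\<lambda>p. 2 powr (q-1) * b p - L * dist x p) ` S))" for x
    have term_le: "2 powr (q-1) * b p \<le> M0" if "p \<in> S" for p
      using mult_left_le_one_le[OF b_nn[of p] _ p25] bM0[OF that] by simp
    have \<phi>_le: "ennreal (\<phi> x) \<le> (if measure \<nu> (ball x r) = 0 then \<infinity> else ennreal (measure \<nu> (ball x r) powr (q - 1)))"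
      if x: "x \<in> K" for x
    proof (cases "measure \<nu> (ball x r) = 0")
      case False
      then have npos: "measure \<nu> (ball x r) > 0" using measure_nonneg[of \<nu> "ball x r"] by linarith
      have "2 powr (q-1) * b p - L * dist x p \<le> measure \<nu> (ball x r) powr (q-1)" if p: "p \<in> S" for p
      proof (cases "dist x p < r/2")
        case True
        have mp: "m0 \<le> measure \<mu> (ball p (2*r))" using mK2 S p by auto
        have "measure \<nu> (ball x r) \<le> 2 * measure \<mu> (ball p (2*r))" using bA'[OF True] mp m0(1) by linarith
        then have "(2 * measure \<mu> (ball p (2*r))) powr (q-1) \<le> measure \<nu> (ball x r) powr (q-1)"
          by (intro powr_mono2') (use q npos in auto)
        moreover have "(2 * measure \<mu> (ball p (2*r))) powr (q-1) = 2 powr (q-1) * b p"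
          unfolding b_def by (simp add: powr_mult)
        ultimately show ?thesis using L by (smt (verit) zero_le_dist mult_nonneg_nonneg)
      next
        case False
        then have "L * (r/2) \<le> L * dist x p" using L by (intro mult_left_mono) auto
        then show ?thesis using term_le[OF p] L by (smt (verit) powr_ge_zero)
      qed
      then have "\<phi> x \<le> measure \<nu> (ball x r) powr (q-1)"
        using S Sne by (simp add: \<phi>_def Max_le_iff)
      then show ?thesis using False by (simp add: ennreal_leI)
    qed simp
    have \<phi>_S: "2 powr (q-1) * b p \<le> \<phi> p" if p: "p \<in> S" for p
    proof -
      have "2 powr (q-1) * b p - L * dist p p \<le> Max ((\<lambda>p'. 2 powr (q-1) * b p' - L * dist p p') ` S)"
        using S p by (intro Max_ge) (auto intro: rev_image_eqI)
      then show ?thesis by (simp add: \<phi>_def)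
    qed
    have \<phi>_b: "0 \<le> \<phi> x \<and> \<phi> x \<le> M0" for x
    proof -
      have "2 powr (q-1) * b p - L * dist x p \<le> M0" if "p \<in> S" for p
        using term_le[OF that] L by (smt (verit) zero_le_dist mult_nonneg_nonneg)
      then show ?thesis using S Sne M0ge by (auto simp: \<phi>_def Max_le_iff)
    qed
    have \<phi>_lip: "L-lipschitz_on K \<phi>"
    proof (rule lipschitz_onI)
      fix x y :: 'a
      have g: "2 powr (q-1) * b p - L * dist u p \<le> (2 powr (q-1) * b p - L * dist v p) + L * dist u v" for p u v
      proof -
        have "dist v p \<le> dist v u + dist u p" by (rule dist_triangle)
        then have "L * dist v p \<le> L * dist u v + L * dist u p" using L
          by (metis dist_commute distrib_left mult_left_mono)
        then show ?thesis by simp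
      qed
      have u1: "Max ((\<lambda>p. 2 powr (q-1) * b p - L * dist x p) ` S) \<le> Max ((\<lambda>p. 2 powr (q-1) * b p - L * dist y p) ` S) + L * dist x y"
        by (rule Max_lip[OF S(1) Sne, of "\<lambda>p u. 2 powr (q-1) * b p - L * dist u p"]) (rule g)
      have u2: "Max ((\<lambda>p. 2 powr (q-1) * b p - L * dist y p) ` S) \<le> Max ((\<lambda>p. 2 powr (q-1) * b p - L * dist x p) ` S) + L * dist x y"
        using Max_lip[OF S(1) Sne, of "\<lambda>p u. 2 powr (q-1) * b p - L * dist u p" L y x] g by (simp add: dist_commute)
      show "dist (\<phi> x) (\<phi> y) \<le> L * dist x y"
        unfolding \<phi>_def dist_real_def by (rule max_aux[OF u1 u2])
    qed (use L in auto)
    have \<phi>_cont: "continuous_on K \<phi>" by (rule lipschitz_on_continuous_on[OF \<phi>_lip])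
    have "ennreal (1 / 2 powr (2-q)) * I_mu K \<mu> (2 * r) q = ennreal (2 powr (q-2) * I2)"
      using I2ge by (simp add: I2eq p27 ennreal_mult)
    also have "\<dots> \<le> ennreal (set_lebesgue_integral \<nu> K \<phi>)"
    proof (rule ennreal_leI)
      have fm\<phi>: "\<bar>set_lebesgue_integral \<mu> K \<phi> - set_lebesgue_integral \<nu> K \<phi>\<bar> \<le> B2 * fortet_mourier K \<mu> \<nu>"
        by (rule fm_bound[OF P N B2(1)]) (use \<phi>_b B2 in \<open>auto intro: lipschitz_on_le[OF \<phi>_lip] order_trans\<close>)
      have int\<mu>: "set_lebesgue_integral \<mu> K \<phi> = (\<Sum>p\<in>S. \<phi> p * measure \<mu> {p})"
        by (rule int_fin[OF P K \<phi>_cont _ S]) (use \<phi>_b in auto)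
      have "2 powr (q-1) * I2 = (\<Sum>p\<in>S. 2 powr (q-1) * b p * measure \<mu> {p})"
        by (simp add: I2_def sum_distrib_left mult.assoc)
      also have "\<dots> \<le> (\<Sum>p\<in>S. \<phi> p * measure \<mu> {p})"
        by (rule sum_mono) (use \<phi>_S in \<open>auto intro: mult_right_mono\<close>)
      finally have i2: "2 powr (q-1) * I2 \<le> set_lebesgue_integral \<mu> K \<phi>" using int\<mu> by simp
      have "2 powr (q-2) * 1 \<le> 2 powr (q-2) * I2" by (rule mult_left_mono) (use I2ge in auto)
      moreover have "2 powr (q-1) * I2 = 2 * (2 powr (q-2) * I2)" using p24 by simp
      moreover have h3: "set_lebesgue_integral \<mu> K \<phi> - B2 * fortet_mourier K \<mu> \<nu> \<le> set_lebesgue_integral \<nu> K \<phi>"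
        using fm\<phi> unfolding abs_le_iff by linarith
      ultimately show "2 powr (q-2) * I2 \<le> set_lebesgue_integral \<nu> K \<phi>"
        using i2 E2 by linarith
    qed
    also have "\<dots> = (\<integral>\<^sup>+x. ennreal (indicator K x *\<^sub>R \<phi> x) \<partial>\<nu>)"
      by (rule nn_set[OF N K \<phi>_cont, symmetric]) (use \<phi>_b in auto)
    also have "\<dots> \<le> I_mu K \<nu> r q"
      unfolding I_mu_def
    proof (rule nn_integral_mono)
      fix x
      show "ennreal (indicator K x *\<^sub>R \<phi> x) \<le> (if measure \<nu> (ball x r) = 0 then \<infinity> else ennreal (measure \<nu> (ball x r) powr (q - 1))) * indicator K x"
        using \<phi>_le[of x] by (cases "x \<in> K") auto
    qed
    finally show "I_mu K \<nu> r q \<ge> ennreal (1 / 2 powr (2-q)) * I_mu K \<mu> (2 * r) q" .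
  qed
qed

theorem corollary2p3:
  fixes K :: "'a::euclidean_space set" and q :: real
  assumes "compact K" and "q < 1"
  shows "\<exists>C>0. \<forall>\<mu> r. fin_prob_on K \<mu> \<and> r > 0 \<and> (\<forall>x\<in>K. measure \<mu> (ball x r) > 0) \<longrightarrow>
           (\<exists>\<delta>>0. \<forall>\<nu>. prob_on K \<nu> \<and> fortet_mourier K \<mu> \<nu> < \<delta> \<longrightarrow>
              I_mu K \<nu> (2 * r) q \<le> ennreal C * I_mu K \<mu> r q \<and>
              I_mu K \<nu> r q \<ge> ennreal (1 / C) * I_mu K \<mu> (2 * r) q)"
proof -
  have "\<forall>\<mu> r. fin_prob_on K \<mu> \<and> r > 0 \<and> (\<forall>x\<in>K. measure \<mu> (ball x r) > 0) \<longrightarrow>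
           (\<exists>\<delta>>0. \<forall>\<nu>. prob_on K \<nu> \<and> fortet_mourier K \<mu> \<nu> < \<delta> \<longrightarrow>
              I_mu K \<nu> (2 * r) q \<le> ennreal (2 powr (2-q)) * I_mu K \<mu> r q \<and>
              I_mu K \<nu> r q \<ge> ennreal (1 / 2 powr (2-q)) * I_mu K \<mu> (2 * r) q)"
    using main_fixed[OF assms] by blast
  moreover have "(0::real) < 2 powr (2-q)" by simp
  ultimately show ?thesis by blast
qed

end
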